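(* Let $\Gamma=\{\gamma_t=\exp(tA):t\in\mathbb R\}\subset GL(3,\mathbb R)$ with nonzero $A=(a_{ij})\in\mathfrak{gl}(3,\mathbb R)$, acting on $\mathbb{RP}^2$ by projective transformations. Let $\infty_Y=(0:1:0)$, $\pi:\mathbb{RP}^2\setminus\{\infty_Y\}\to\mathbb{RP}^1$, $\pi(x:y:z)=(x:z)$, $S_0=\{\infty_Y\}$, $S=\{(\gamma,p):\gamma(p)=\infty_Y\}$, and $L_0=\{(x,y)\in\mathbb R^2:a_{32}x=a_{12}\}$ if $a_{32}\ne0$; $L_0=\mathbb{RP}^2\setminus\mathbb R^2$ (the line at infinity) if $a_{32}=0$ and $a_{12}\neq0$; $L_0=\mathbb{RP}^2$ if $a_{32}=a_{12}=0$. Let $L=\{(\gamma,p):\gamma(p)\in L_0\}$ and $K=L\cup S$. Then $\Pi:\Gamma\times\mathbb{RP}^2\to\mathbb{RP}^1$, $\Pi(\gamma,p)=\pi(\gamma(p))$, is defined on $(\Gamma\times\mathbb{RP}^2)\setminus S$ and is locally transversal on $(\Gamma\times\mathbb{RP}^2)\setminus K$.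
   Context: Homogeneous coordinates: $(x:y:z)$ with $z\ne0$ is the finite point $(x/z,y/z)\in\mathbb R^2$; points with $z=0$ form the line at infinity; matrices act on homogeneous coordinates as on vectors. Transversality (here $k=m=1$), in smooth local coordinates: for $\Pi(t,p)$ put $\Phi(t,v,w)=\frac{\Pi(t,v)-\Pi(t,w)}{|v-w|}$ for $v\ne w$; $\Pi$ is transversal on $\Lambda\times\Omega$ if there is $C>0$ such that for all $t$ and $v\ne w$: if $|\Phi(t,v,w)|\le C$ then $|\partial_t\Phi(t,v,w)|\ge C$. Locally transversal: the domain can be covered by open sets on each of which (in local coordinates of parameter space, domain and target) the restriction is transversal. *)

theory Defs
  imports "HOL-Analysis.Analysis"
begin

(* Matrices act on homogeneous coordinates (column vectors) via *v.
   Entry a_ij of A is  A $ i $ j  (row i, column j). *)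

definition matpow :: "real^3^3 \<Rightarrow> nat \<Rightarrow> real^3^3" where
  "matpow A n = ((\<lambda>M. A ** M) ^^ n) (mat 1)"

definition mexp :: "real \<Rightarrow> real^3^3 \<Rightarrow> real^3^3" where
  "mexp t A = (\<Sum>n. ((t ^ n) / fact n) *\<^sub>R matpow A n)"

(* gamma_t(p) on a homogeneous representative v of p *)
definition gam :: "real^3^3 \<Rightarrow> real \<Rightarrow> real^3 \<Rightarrow> real^3" where
  "gam A t v = mexp t A *v v"

definition proj_eq :: "real^3 \<Rightarrow> real^3 \<Rightarrow> bool" where
  "proj_eq v w \<longleftrightarrow> v \<noteq> 0 \<and> w \<noteq> 0 \<and> (\<exists>c. c \<noteq> 0 \<and> v = c *\<^sub>R w)"

definition infY :: "real^3" where
  "infY = vector [0, 1, 0]"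

definition in_L0 :: "real^3^3 \<Rightarrow> real^3 \<Rightarrow> bool" where
  "in_L0 A w \<longleftrightarrow>
     (if A$3$2 \<noteq> 0 then w$3 \<noteq> 0 \<and> A$3$2 * (w$1 / w$3) = A$1$2
      else if A$1$2 \<noteq> 0 then w$3 = 0
      else True)"

(* S, L, K as sets of (t, v): t parametrises gamma_t, v a nonzero homogeneous
   representative of p in RP^2 *)
definition setS :: "real^3^3 \<Rightarrow> (real \<times> (real^3)) set" where
  "setS A = {(t, v). v \<noteq> 0 \<and> proj_eq (gam A t v) infY}"

definition setL :: "real^3^3 \<Rightarrow> (real \<times> (real^3)) set" where
  "setL A = {(t, v). v \<noteq> 0 \<and> in_L0 A (gam A t v)}"

definition setK :: "real^3^3 \<Rightarrow> (real \<times> (real^3)) set" where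
  "setK A = setL A \<union> setS A"

definition chart_inv :: "nat \<Rightarrow> real^2 \<Rightarrow> real^3" where
  "chart_inv j u =
     (if j = 1 then vector [1, u$1, u$2]
      else if j = 2 then vector [u$1, 1, u$2]
      else vector [u$1, u$2, 1])"

definition chart_coord :: "nat \<Rightarrow> real^3 \<Rightarrow> real^2" where
  "chart_coord j v =
     (if j = 1 then vector [v$2 / v$1, v$3 / v$1]
      else if j = 2 then vector [v$1 / v$2, v$3 / v$2]
      else vector [v$1 / v$3, v$2 / v$3])"

definition chart_dom :: "nat \<Rightarrow> real^3 \<Rightarrow> bool" where
  "chart_dom j v \<longleftrightarrow>
     (if j = 1 then v$1 \<noteq> 0 else if j = 2 then v$2 \<noteq> 0 else v$3 \<noteq> 0)"

(* pi(x:y:z) = (x:z) in the standard affine charts of RP^1: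
   chart 1 on {z \<noteq> 0}: x/z;  chart 2 on {x \<noteq> 0}: z/x *)
definition tchart_dom :: "nat \<Rightarrow> real^3 \<Rightarrow> bool" where
  "tchart_dom k w \<longleftrightarrow> (if k = 1 then w$3 \<noteq> 0 else w$1 \<noteq> 0)"

definition tchart_pi :: "nat \<Rightarrow> real^3 \<Rightarrow> real" where
  "tchart_pi k w = (if k = 1 then w$1 / w$3 else w$3 / w$1)"

definition Pi_coord :: "real^3^3 \<Rightarrow> nat \<Rightarrow> nat \<Rightarrow> real \<Rightarrow> real^2 \<Rightarrow> real" where
  "Pi_coord A j k t u = tchart_pi k (gam A t (chart_inv j u))"

definition transversal :: "(real \<Rightarrow> real^2 \<Rightarrow> real) \<Rightarrow> real set \<Rightarrow> (real^2) set \<Rightarrow> bool" where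
  "transversal P Lam Om \<longleftrightarrow>
     (\<exists>C>0. \<forall>t\<in>Lam. \<forall>v\<in>Om. \<forall>w\<in>Om. v \<noteq> w \<longrightarrow>
        (let Phi = (\<lambda>s. (P s v - P s w) / norm (v - w)) in
          \<bar>Phi t\<bar> \<le> C \<longrightarrow>
          (\<exists>D. (Phi has_real_derivative D) (at t) \<and> \<bar>D\<bar> \<ge> C)))"

definition Pi_locally_transversal :: "real^3^3 \<Rightarrow> bool" where
  "Pi_locally_transversal A \<longleftrightarrow>
     (\<forall>t0 v0. v0 \<noteq> 0 \<and> (t0, v0) \<notin> setK A \<longrightarrow>
       (\<exists>Lam Om j k. j \<in> {1,2,3} \<and> k \<in> {1,2} \<and>
          open Lam \<and> t0 \<in> Lam \<and> open Om \<and>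
          chart_dom j v0 \<and> chart_coord j v0 \<in> Om \<and>
          (\<forall>t\<in>Lam. \<forall>u\<in>Om. (t, chart_inv j u) \<notin> setK A \<and>
                              tchart_dom k (gam A t (chart_inv j u))) \<and>
          transversal (Pi_coord A j k) Lam Om))"

end

theory Submission
  imports Defs
begin



lemma matpow_0[simp]: "matpow A 0 = mat 1" by (simp add: matpow_def)
lemma matpow_Suc: "matpow A (Suc n) = A ** matpow A n" by (simp add: matpow_def)
lemma matpow_Suc': "matpow A (Suc n) = matpow A n ** A"
proof (induction n)
  case 0 then show ?case by (simp add: matpow_Suc)
next
  case (Suc n) then show ?case by (simp add: matpow_Suc matrix_mul_assoc)
qed

definition Bnd :: "real^3^3 \<Rightarrow> real" where
  "Bnd A = (\<Sum>i\<in>UNIV. \<Sum>l\<in>UNIV. \<bar>A$i$l\<bar>)"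

lemma Bnd_row: "(\<Sum>m\<in>UNIV. \<bar>A$i$m\<bar>) \<le> Bnd A"
proof -
  have "(\<Sum>m\<in>UNIV. \<bar>A$i$m\<bar>) \<le> (\<Sum>i'\<in>UNIV. \<Sum>m\<in>UNIV. \<bar>A$i'$m\<bar>)"
    by (rule member_le_sum[where f="\<lambda>i'. \<Sum>m\<in>UNIV. \<bar>A$i'$m\<bar>"]) (auto intro: sum_nonneg)
  then show ?thesis by (simp add: Bnd_def)
qed

lemma Bnd_nonneg: "0 \<le> Bnd A" unfolding Bnd_def by (auto intro!: sum_nonneg)

lemma matpow_bound: "\<bar>matpow A n $ i $ l\<bar> \<le> Bnd A ^ n"
proof (induction n arbitrary: i l)
  case 0 then show ?case by (simp add: mat_def)
next
  case (Suc n)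
  have "\<bar>matpow A (Suc n) $ i $ l\<bar> = \<bar>\<Sum>m\<in>UNIV. A$i$m * matpow A n $ m $ l\<bar>"
    by (simp add: matpow_Suc matrix_matrix_mult_def)
  also have "\<dots> \<le> (\<Sum>m\<in>UNIV. \<bar>A$i$m\<bar> * Bnd A ^ n)"
    by (rule order_trans[OF sum_abs]) (auto intro!: sum_mono simp: abs_mult intro: mult_left_mono Suc.IH)
  also have "\<dots> = (\<Sum>m\<in>UNIV. \<bar>A$i$m\<bar>) * Bnd A ^ n" by (simp add: sum_distrib_right)
  also have "\<dots> \<le> Bnd A * Bnd A ^ n" by (rule mult_right_mono[OF Bnd_row]) (simp add: Bnd_nonneg)
  finally show ?case by simp
qed

definition cf :: "real^3^3 \<Rightarrow> 3 \<Rightarrow> 3 \<Rightarrow> nat \<Rightarrow> real" where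
  "cf A i l n = matpow A n $ i $ l / fact n"

lemma cf_summable: "summable (\<lambda>n. cf A i l n * z ^ n)"
proof (rule summable_comparison_test')
  show "summable (\<lambda>n. inverse (fact n) * (Bnd A * \<bar>z\<bar>) ^ n)" by (rule summable_exp)
  fix n
  have "norm (cf A i l n * z ^ n) = \<bar>matpow A n $ i $ l\<bar> * \<bar>z\<bar> ^ n / fact n"
    by (simp add: cf_def abs_mult power_abs)
  also have "\<dots> \<le> Bnd A ^ n * \<bar>z\<bar> ^ n / fact n"
    by (intro divide_right_mono mult_right_mono matpow_bound) auto
  finally show "norm (cf A i l n * z ^ n) \<le> inverse (fact n) * (Bnd A * \<bar>z\<bar>) ^ n"
    by (simp add: power_mult_distrib divide_inverse mult.commute)
qed

lemma norm_mat_le: "norm (X::real^3^3) \<le> (\<Sum>i\<in>UNIV. \<Sum>l\<in>UNIV. \<bar>X$i$l\<bar>)"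
proof -
  have "norm X \<le> (\<Sum>i\<in>UNIV. norm (X$i))" unfolding norm_vec_def by (rule L2_set_le_sum) simp
  also have "\<dots> \<le> (\<Sum>i\<in>UNIV. \<Sum>l\<in>UNIV. \<bar>X$i$l\<bar>)"
    by (rule sum_mono) (rule norm_le_l1_cart)
  finally show ?thesis .
qed

lemma ent_bound: "\<bar>(((t ^ n) / fact n) *\<^sub>R matpow A n) $ i $ l\<bar> \<le> inverse (fact n) * (Bnd A * \<bar>t\<bar>) ^ n"
proof -
    have "\<bar>(((t ^ n) / fact n) *\<^sub>R matpow A n) $ i $ l\<bar> = \<bar>matpow A n $ i $ l\<bar> * \<bar>t\<bar> ^ n / fact n"
      by (simp add: abs_mult power_abs)
    also have "\<dots> \<le> Bnd A ^ n * \<bar>t\<bar> ^ n / fact n"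
      by (intro divide_right_mono mult_right_mono matpow_bound) auto
    finally show ?thesis
      by (simp add: power_mult_distrib divide_inverse mult.commute)
qed

lemma mexp_summable: "summable (\<lambda>n. ((t ^ n) / fact n) *\<^sub>R matpow A n)"
proof (rule summable_comparison_test')
  show "summable (\<lambda>n. 9 * (inverse (fact n) * (Bnd A * \<bar>t\<bar>) ^ n))"
    by (intro summable_mult summable_exp)
  fix n
  have "norm (((t ^ n) / fact n) *\<^sub>R matpow A n) \<le>
        (\<Sum>i\<in>(UNIV::3 set). \<Sum>l\<in>(UNIV::3 set). inverse (fact n) * (Bnd A * \<bar>t\<bar>) ^ n)"
    apply (rule order_trans[OF norm_mat_le])
    by (intro sum_mono ent_bound)
  also have "\<dots> = 9 * (inverse (fact n) * (Bnd A * \<bar>t\<bar>) ^ n)" by simp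
  finally show "norm (((t ^ n) / fact n) *\<^sub>R matpow A n) \<le> 9 * (inverse (fact n) * (Bnd A * \<bar>t\<bar>) ^ n)" .
qed

lemma mexp_entry: "mexp t A $ i $ l = (\<Sum>n. cf A i l n * t ^ n)"
proof -
  have "mexp t A $ i $ l = (\<Sum>n. (((t ^ n) / fact n) *\<^sub>R matpow A n) $ i $ l)"
    unfolding mexp_def
    using bounded_linear.suminf[OF bounded_linear_compose[OF bounded_linear_vec_nth bounded_linear_vec_nth, of i l] mexp_summable[of t A]]
    by simp
  then show ?thesis by (simp add: cf_def mult.commute)
qed

lemma diffs_cf: "diffs (cf A i l) n = (\<Sum>m\<in>UNIV. A$i$m * cf A m l n)"
proof -
  have "diffs (cf A i l) n = matpow A (Suc n) $ i $ l / fact n"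
    unfolding diffs_def cf_def by (simp add: fact_Suc del: of_nat_Suc)
  then show ?thesis
    by (simp add: matpow_Suc matrix_matrix_mult_def cf_def sum_divide_distrib)
qed

lemma diffs_cf': "diffs (cf A i l) n = (\<Sum>m\<in>UNIV. cf A i m n * A$m$l)"
proof -
  have "diffs (cf A i l) n = matpow A (Suc n) $ i $ l / fact n"
    unfolding diffs_def cf_def by (simp add: fact_Suc del: of_nat_Suc)
  then show ?thesis
    by (simp add: matpow_Suc' matrix_matrix_mult_def cf_def sum_divide_distrib)
qed

lemma mexp_deriv: "((\<lambda>t. mexp t A $ i $ l) has_real_derivative (A ** mexp t A) $ i $ l) (at t)"
proof -
  have d: "((\<lambda>x. \<Sum>n. cf A i l n * x^n) has_real_derivative (\<Sum>n. diffs (cf A i l) n * t^n)) (at t)"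
    by (rule termdiffs_strong_converges_everywhere) (rule cf_summable)
  have "(\<Sum>n. diffs (cf A i l) n * t^n) = (\<Sum>n. \<Sum>m\<in>UNIV. A$i$m * (cf A m l n * t^n))"
    by (simp add: diffs_cf sum_distrib_right mult.assoc)
  also have "\<dots> = (\<Sum>m\<in>UNIV. \<Sum>n. A$i$m * (cf A m l n * t^n))"
    by (rule suminf_sum) (intro summable_mult cf_summable)
  also have "\<dots> = (\<Sum>m\<in>UNIV. A$i$m * mexp t A $ m $ l)"
    by (simp add: suminf_mult cf_summable mexp_entry)
  also have "\<dots> = (A ** mexp t A) $ i $ l" by (simp add: matrix_matrix_mult_def)
  finally show ?thesis using d by (simp add: mexp_entry)
qed

lemma mexp_deriv': "((\<lambda>t. mexp t A $ i $ l) has_real_derivative (mexp t A ** A) $ i $ l) (at t)"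
proof -
  have d: "((\<lambda>x. \<Sum>n. cf A i l n * x^n) has_real_derivative (\<Sum>n. diffs (cf A i l) n * t^n)) (at t)"
    by (rule termdiffs_strong_converges_everywhere) (rule cf_summable)
  have "(\<Sum>n. diffs (cf A i l) n * t^n) = (\<Sum>n. \<Sum>m\<in>UNIV. A$m$l * (cf A i m n * t^n))"
    by (simp add: diffs_cf' sum_distrib_right sum_distrib_left mult_ac)
  also have "\<dots> = (\<Sum>m\<in>UNIV. \<Sum>n. A$m$l * (cf A i m n * t^n))"
    by (rule suminf_sum) (intro summable_mult cf_summable)
  also have "\<dots> = (\<Sum>m\<in>UNIV. mexp t A $ i $ m * A$m$l)"
    using cf_summable[of A i _ t] by (simp add: suminf_mult mexp_entry mult.commute)
  also have "\<dots> = (mexp t A ** A) $ i $ l" by (simp add: matrix_matrix_mult_def)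
  finally show ?thesis using d by (simp add: mexp_entry)
qed

lemma mexp_0: "mexp 0 A = mat 1"
  unfolding vec_eq_iff mexp_entry powser_zero by (simp add: cf_def)

lemma mexp_inv: "mexp t A ** mexp (-t) A = mat 1"
proof -
  have "\<And>i l. (mexp t A ** mexp (-t) A) $ i $ l = (mexp 0 A ** mexp (-0) A) $ i $ l"
  proof -
    fix i l
    let ?f = "\<lambda>s. \<Sum>m\<in>UNIV. mexp s A $ i $ m * mexp (-s) A $ m $ l"
    have "\<forall>s. DERIV ?f s :> 0"
    proof
      fix s
      have dm: "DERIV (\<lambda>s. mexp (-s) A $ m $ l) s :> - (A ** mexp (-s) A) $ m $ l" for m
        using DERIV_mirror[of "\<lambda>t. mexp t A $ m $ l" _ s, THEN iffD1] mexp_deriv[of A m l "-s"] by simp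
      have D: "DERIV ?f s :> (\<Sum>m\<in>UNIV. mexp s A $ i $ m * (- (A ** mexp (-s) A) $ m $ l)
             + (mexp s A ** A) $ i $ m * mexp (-s) A $ m $ l)"
        by (intro DERIV_sum) (rule DERIV_mult'[OF mexp_deriv' dm])
      have "(\<Sum>m\<in>UNIV. mexp s A $ i $ m * (- (A ** mexp (-s) A) $ m $ l)
             + (mexp s A ** A) $ i $ m * mexp (-s) A $ m $ l) = ((mexp s A ** A) ** mexp (-s) A) $ i $ l - (mexp s A ** (A ** mexp (-s) A)) $ i $ l"
        by (simp add: matrix_matrix_mult_def sum.distrib sum_subtractf algebra_simps)
      also have "\<dots> = 0" by (simp add: matrix_mul_assoc)
      finally show "DERIV ?f s :> 0" using D by simp
    qed
    then have "?f t = ?f 0" by (rule DERIV_isconst_all)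
    then show "(mexp t A ** mexp (-t) A) $ i $ l = (mexp 0 A ** mexp (-0) A) $ i $ l"
      by (simp add: matrix_matrix_mult_def)
  qed
  then show ?thesis by (simp add: vec_eq_iff mexp_0)
qed




definition Qk :: "nat \<Rightarrow> real^3 \<Rightarrow> real" where "Qk k y = (if k = 1 then y$3 else y$1)"
definition Pk :: "nat \<Rightarrow> real^3 \<Rightarrow> real" where "Pk k y = (if k = 1 then y$1 else y$3)"
definition om :: "nat \<Rightarrow> real^3 \<Rightarrow> real^3 \<Rightarrow> real" where "om k y z = Qk k y * Pk k z - Pk k y * Qk k z"
definition trip :: "real^3 \<Rightarrow> real^3 \<Rightarrow> real^3 \<Rightarrow> real" where
  "trip x y z = x$1 * (y$2 * z$3 - y$3 * z$2) - x$2 * (y$1 * z$3 - y$3 * z$1) + x$3 * (y$1 * z$2 - y$2 * z$1)"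
definition Gf :: "real^3^3 \<Rightarrow> real^3 \<Rightarrow> real" where
  "Gf A w = A$1$2 * w$3 - A$3$2 * w$1"

definition nn :: "nat \<Rightarrow> real^3^3 \<Rightarrow> real^3 \<Rightarrow> real^3 \<Rightarrow> real" where
  "nn k A y D = (Qk k y)^2 * (om k y (A *v D) + om k D (A *v y)) - om k y (A *v y) * (2 * Qk k y) * Qk k D"

lemma det_identity:
  assumes "k = 1 \<or> k = 2"
  shows "om k y D1 * nn k A y D2 - om k y D2 * nn k A y D1 = (Qk k y)^2 * Gf A y * trip y D1 D2"
  using assms
  by (auto simp: om_def Qk_def Pk_def nn_def Gf_def trip_def matrix_vector_mult_def sum_3 power2_eq_square algebra_simps)

lemma Qk_add: "Qk k (x + y) = Qk k x + Qk k y" by (simp add: Qk_def)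
lemma Qk_scale: "Qk k (c *\<^sub>R x) = c * Qk k x" by (simp add: Qk_def)
lemma Qk_zero: "Qk k 0 = 0" by (simp add: Qk_def)
lemma Pk_add: "Pk k (x + y) = Pk k x + Pk k y" by (simp add: Pk_def)
lemma Pk_scale: "Pk k (c *\<^sub>R x) = c * Pk k x" by (simp add: Pk_def)
lemma om_addL: "om k (x + y) z = om k x z + om k y z" by (simp add: om_def Qk_add Pk_add algebra_simps)
lemma om_addR: "om k z (x + y) = om k z x + om k z y" by (simp add: om_def Qk_add Pk_add algebra_simps)
lemma om_scaleL: "om k (c *\<^sub>R x) z = c * om k x z" by (simp add: om_def Qk_scale Pk_scale algebra_simps)
lemma om_scaleR: "om k z (c *\<^sub>R x) = c * om k z x" by (simp add: om_def Qk_scale Pk_scale algebra_simps)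
lemma om_self: "om k x x = 0" by (simp add: om_def)
lemma om_zeroR: "om k x 0 = 0" by (simp add: om_def Qk_def Pk_def)

lemma F_diff:
  assumes "Qk k y \<noteq> 0" "Qk k Y \<noteq> 0" "Y = y + d1 *\<^sub>R D1 + d2 *\<^sub>R D2"
  shows "Pk k Y / Qk k Y - Pk k y / Qk k y =
     om k y D1 / (Qk k y * Qk k Y) * d1 + om k y D2 / (Qk k y * Qk k Y) * d2"
proof -
  have "Pk k Y / Qk k Y - Pk k y / Qk k y = om k y Y / (Qk k y * Qk k Y)"
    using assms(1,2) by (simp add: om_def field_simps)
  also have "om k y Y = d1 * om k y D1 + d2 * om k y D2"
    unfolding assms(3) by (simp add: om_addR om_scaleR om_self)
  finally show ?thesis by (simp add: add_divide_distrib mult.commute)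
qed

definition Vf :: "nat \<Rightarrow> real^3^3 \<Rightarrow> real^3 \<Rightarrow> real" where
  "Vf k A y = om k y (A *v y) / (Qk k y)^2"

definition hh :: "nat \<Rightarrow> real^3^3 \<Rightarrow> real^3 \<Rightarrow> real^3 \<Rightarrow> real^3 \<Rightarrow> real" where
  "hh k A y Y D = ((Qk k y)^2 * (om k y (A *v D) + om k D (A *v y) + om k D (A *v (Y - y)))
        - om k y (A *v y) * (2 * Qk k y + Qk k (Y - y)) * Qk k D) / ((Qk k y)^2 * (Qk k Y)^2)"

lemma scalar_V:
  fixes r0 X1 X2 Q q1 q2 d1 d2 R S :: real
  assumes "Q \<noteq> 0" "R \<noteq> 0" "R = Q + S" "S = q1 * d1 + q2 * d2"
  shows "(r0 + (X1 * d1 + X2 * d2)) / R^2 - r0 / Q^2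
    = (Q^2 * X1 - r0 * (2 * Q + S) * q1) / (Q^2 * R^2) * d1
    + (Q^2 * X2 - r0 * (2 * Q + S) * q2) / (Q^2 * R^2) * d2"
proof -
  have l: "(r0 + (X1 * d1 + X2 * d2)) / R^2 - r0 / Q^2 = (Q^2 * (r0 + (X1 * d1 + X2 * d2)) - r0 * R^2) / (Q^2 * R^2)"
    using assms(1,2) by (simp add: diff_frac_eq mult.commute)
  have r: "(Q^2 * X1 - r0 * (2 * Q + S) * q1) / (Q^2 * R^2) * d1
    + (Q^2 * X2 - r0 * (2 * Q + S) * q2) / (Q^2 * R^2) * d2 =
    ((Q^2 * X1 - r0 * (2 * Q + S) * q1) * d1 + (Q^2 * X2 - r0 * (2 * Q + S) * q2) * d2) / (Q^2 * R^2)"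
    by (simp add: add_divide_distrib)
  have n: "Q^2 * (r0 + (X1 * d1 + X2 * d2)) - r0 * R^2 =
    (Q^2 * X1 - r0 * (2 * Q + S) * q1) * d1 + (Q^2 * X2 - r0 * (2 * Q + S) * q2) * d2"
    unfolding assms(3) assms(4) by (simp add: power2_eq_square algebra_simps)
  show ?thesis unfolding l r n ..
qed

lemma Ft_diff:
  assumes "Qk k y \<noteq> 0" "Qk k Y \<noteq> 0" "Y = y + d1 *\<^sub>R D1 + d2 *\<^sub>R D2"
  shows "Vf k A Y - Vf k A y = hh k A y Y D1 * d1 + hh k A y Y D2 * d2"
proof -
  define Z where "Z = Y - y"
  have Z: "Z = d1 *\<^sub>R D1 + d2 *\<^sub>R D2" unfolding Z_def assms(3) by simp
  have Y: "Y = y + Z" unfolding Z_def by simp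
  have QY: "Qk k Y = Qk k y + (Qk k D1 * d1 + Qk k D2 * d2)"
    unfolding Y Z by (simp add: Qk_add Qk_scale mult.commute)
  have omY: "om k Y (A *v Y) = om k y (A *v y) +
     ((om k y (A *v D1) + om k D1 (A *v y) + om k D1 (A *v Z)) * d1
     + (om k y (A *v D2) + om k D2 (A *v y) + om k D2 (A *v Z)) * d2)"
  proof -
    have "om k Y (A *v Y) = om k y (A *v y) + om k y (A *v Z) + om k Z (A *v y) + om k Z (A *v Z)"
      unfolding Y by (simp add: matrix_vector_right_distrib om_addL om_addR)
    also have "om k y (A *v Z) = d1 * om k y (A *v D1) + d2 * om k y (A *v D2)"
      unfolding Z by (simp add: matrix_vector_right_distrib matrix_vector_mult_scaleR om_addR om_scaleR)
    also have "om k Z (A *v y) = d1 * om k D1 (A *v y) + d2 * om k D2 (A *v y)"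
      unfolding Z by (simp add: om_addL om_scaleL)
    also have "om k Z (A *v Z) = d1 * om k D1 (A *v Z) + d2 * om k D2 (A *v Z)"
      by (subst (1) Z) (simp add: om_addL om_scaleL)
    finally show ?thesis by (simp add: algebra_simps)
  qed
  have "Vf k A Y - Vf k A y = (om k y (A *v y) +
     ((om k y (A *v D1) + om k D1 (A *v y) + om k D1 (A *v Z)) * d1
     + (om k y (A *v D2) + om k D2 (A *v y) + om k D2 (A *v Z)) * d2)) / (Qk k y + (Qk k D1 * d1 + Qk k D2 * d2))^2
     - om k y (A *v y) / (Qk k y)^2"
    unfolding Vf_def omY QY[symmetric] ..
  also have "\<dots> = hh k A y Y D1 * d1 + hh k A y Y D2 * d2"
    apply (subst scalar_V[where S="Qk k Z"])
    using assms(1,2) QY apply (simp_all add: Y Qk_add)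
      apply (simp add: Z Qk_add Qk_scale mult.commute)
    unfolding hh_def Z_def[symmetric] QY[symmetric]
    apply (simp add: Qk_add Qk_scale mult_ac)
    done
  finally show ?thesis .
qed

lemma hh_base: "Qk k y \<noteq> 0 \<Longrightarrow> hh k A y y D = nn k A y D / (Qk k y)^4"
  by (simp add: hh_def nn_def om_zeroR Qk_zero power4_eq_xxxx power2_eq_square mult.assoc)

lemma base_det:
  assumes "k = 1 \<or> k = 2" "Qk k y \<noteq> 0"
  shows "om k y D1 / (Qk k y * Qk k y) * hh k A y y D2 - om k y D2 / (Qk k y * Qk k y) * hh k A y y D1
     = Gf A y * trip y D1 D2 / (Qk k y)^4"
proof -
  have "om k y D1 / (Qk k y * Qk k y) * hh k A y y D2 - om k y D2 / (Qk k y * Qk k y) * hh k A y y D1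
     = (om k y D1 * nn k A y D2 - om k y D2 * nn k A y D1) / ((Qk k y)^2 * (Qk k y)^4)"
    using assms(2) by (simp add: hh_base diff_divide_distrib power2_eq_square)
  also have "\<dots> = Gf A y * trip y D1 D2 / (Qk k y)^4"
    unfolding det_identity[OF assms(1)] using assms(2) by (simp add: field_simps)
  finally show ?thesis .
qed

lemma trip_mat: "trip (M *v x) (M *v a) (M *v b) = det M * trip x a b"
  by (simp add: trip_def det_3 matrix_vector_mult_def sum_3 algebra_simps)

definition cx :: "nat \<Rightarrow> real^3" where
  "cx j = (if j = 1 then vector [1,0,0] else if j = 2 then vector [0,1,0] else vector [0,0,1])"
definition ca :: "nat \<Rightarrow> real^3" where
  "ca j = (if j = 1 then vector [0,1,0] else vector [1,0,0])"
definition cb :: "nat \<Rightarrow> real^3" where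
  "cb j = (if j = 1 \<or> j = 2 then vector [0,0,1] else vector [0,1,0])"

lemma chart_inv_eq: "chart_inv j u = cx j + u$1 *\<^sub>R ca j + u$2 *\<^sub>R cb j"
  by (simp add: chart_inv_def cx_def ca_def cb_def vec_eq_iff forall_3)

lemma trip_chart: "trip (chart_inv j u) (ca j) (cb j) \<noteq> 0"
  by (simp add: chart_inv_def ca_def cb_def trip_def)




lemma dist3: "dist (t, v, w) (t0, u0, u1) \<le> dist t t0 + dist v u0 + dist w u1"
proof -
  have a: "dist (v, w) (u0, u1) \<le> dist v u0 + dist w u1"
    unfolding dist_Pair_Pair using sqrt_sum_squares_le_sum_abs[of "dist v u0" "dist w u1"] by simp
  have "dist (t, v, w) (t0, u0, u1) \<le> dist t t0 + dist (v, w) (u0, u1)"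
    unfolding dist_Pair_Pair[of t "(v,w)"] using sqrt_sum_squares_le_sum_abs[of "dist t t0" "dist (v,w) (u0,u1)"] by simp
  with a show ?thesis by simp
qed

lemma unit_lower:
  fixes e :: "real^2"
  assumes "norm e = 1" "G1 * H2 - G2 * H1 \<noteq> 0"
  shows "\<bar>G1 * H2 - G2 * H1\<bar> / (2 * (\<bar>G1\<bar> + \<bar>G2\<bar> + \<bar>H1\<bar> + \<bar>H2\<bar>))
         \<le> \<bar>G1 * e$1 + G2 * e$2\<bar> + \<bar>H1 * e$1 + H2 * e$2\<bar>"
proof -
  define d where "d = G1 * H2 - G2 * H1"
  define M where "M = \<bar>G1\<bar> + \<bar>G2\<bar> + \<bar>H1\<bar> + \<bar>H2\<bar>"
  define a where "a = G1 * e$1 + G2 * e$2"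
  define b where "b = H1 * e$1 + H2 * e$2"
  have Mpos: "M > 0" using assms(2) unfolding M_def by (cases "G1 = 0"; cases "G2 = 0") auto
  have e1: "e$1 * d = H2 * a - G2 * b" unfolding a_def b_def d_def by (simp add: algebra_simps)
  have e2: "e$2 * d = G1 * b - H1 * a" unfolding a_def b_def d_def by (simp add: algebra_simps)
  have b1: "\<bar>e$1\<bar> * \<bar>d\<bar> \<le> M * (\<bar>a\<bar> + \<bar>b\<bar>)"
  proof -
    have "\<bar>e$1\<bar> * \<bar>d\<bar> = \<bar>H2 * a - G2 * b\<bar>" using e1 by (metis abs_mult)
    also have "\<dots> \<le> \<bar>H2\<bar> * \<bar>a\<bar> + \<bar>G2\<bar> * \<bar>b\<bar>" by (simp add: abs_mult[symmetric] abs_triangle_ineq4)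
    also have "\<dots> \<le> M * \<bar>a\<bar> + M * \<bar>b\<bar>" unfolding M_def
      by (intro add_mono mult_right_mono) auto
    finally show ?thesis by (simp add: distrib_left)
  qed
  have b2: "\<bar>e$2\<bar> * \<bar>d\<bar> \<le> M * (\<bar>a\<bar> + \<bar>b\<bar>)"
  proof -
    have "\<bar>e$2\<bar> * \<bar>d\<bar> = \<bar>G1 * b - H1 * a\<bar>" using e2 by (metis abs_mult)
    also have "\<dots> \<le> \<bar>G1\<bar> * \<bar>b\<bar> + \<bar>H1\<bar> * \<bar>a\<bar>" by (simp add: abs_mult[symmetric] abs_triangle_ineq4)
    also have "\<dots> \<le> M * \<bar>b\<bar> + M * \<bar>a\<bar>" unfolding M_def
      by (intro add_mono mult_right_mono) auto
    finally show ?thesis by (simp add: distrib_left)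
  qed
  have "1 \<le> \<bar>e$1\<bar> + \<bar>e$2\<bar>" using norm_le_l1_cart[of e] assms(1) by (simp add: sum_2)
  then have "\<bar>d\<bar> \<le> (\<bar>e$1\<bar> + \<bar>e$2\<bar>) * \<bar>d\<bar>" by (simp add: mult_le_cancel_right1)
  also have "\<dots> \<le> 2 * M * (\<bar>a\<bar> + \<bar>b\<bar>)" using b1 b2 by (simp add: distrib_right)
  finally have "\<bar>d\<bar> \<le> 2 * M * (\<bar>a\<bar> + \<bar>b\<bar>)" .
  then show ?thesis using Mpos unfolding d_def[symmetric] M_def[symmetric] a_def[symmetric] b_def[symmetric]
    by (simp add: divide_le_eq mult.commute)
qed

lemma cont_delta:
  fixes f :: "'a::metric_space \<Rightarrow> real"
  assumes "isCont f z" "\<epsilon> > 0"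
  obtains \<delta> where "\<delta> > 0" "\<And>z'. dist z' z < \<delta> \<Longrightarrow> \<bar>f z' - f z\<bar> < \<epsilon>"
  using assms unfolding continuous_at_eps_delta dist_real_def by metis

lemma transversal_generic:
  fixes F Ft :: "real \<Rightarrow> real^2 \<Rightarrow> real" and g1 g2 h1 h2 :: "real \<times> (real^2) \<times> (real^2) \<Rightarrow> real"
  assumes cg1: "isCont g1 (t0,u0,u0)" and cg2: "isCont g2 (t0,u0,u0)"
    and ch1: "isCont h1 (t0,u0,u0)" and ch2: "isCont h2 (t0,u0,u0)"
    and det: "g1 (t0,u0,u0) * h2 (t0,u0,u0) - g2 (t0,u0,u0) * h1 (t0,u0,u0) \<noteq> 0"
    and r: "r > 0"
    and eqF: "\<And>t v w. dist t t0 < r \<Longrightarrow> dist v u0 < r \<Longrightarrow> dist w u0 < r \<Longrightarrow>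
               F t v - F t w = g1 (t,v,w) * (v-w)$1 + g2 (t,v,w) * (v-w)$2"
    and eqFt: "\<And>t v w. dist t t0 < r \<Longrightarrow> dist v u0 < r \<Longrightarrow> dist w u0 < r \<Longrightarrow>
               Ft t v - Ft t w = h1 (t,v,w) * (v-w)$1 + h2 (t,v,w) * (v-w)$2"
    and der: "\<And>t v. dist t t0 < r \<Longrightarrow> dist v u0 < r \<Longrightarrow> ((\<lambda>s. F s v) has_real_derivative Ft t v) (at t)"
  shows "\<exists>\<delta>>0. \<delta> \<le> r \<and> transversal F (ball t0 \<delta>) (ball u0 \<delta>)"
proof -
  define z0 where "z0 = (t0,u0,u0)"
  define G1 where "G1 = g1 z0"
  define G2 where "G2 = g2 z0"
  define H1 where "H1 = h1 z0"
  define H2 where "H2 = h2 z0"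
  define c where "c = \<bar>G1 * H2 - G2 * H1\<bar> / (2 * (\<bar>G1\<bar> + \<bar>G2\<bar> + \<bar>H1\<bar> + \<bar>H2\<bar>))"
  have d0: "G1 * H2 - G2 * H1 \<noteq> 0" using det unfolding G1_def G2_def H1_def H2_def z0_def .
  have Mpos: "\<bar>G1\<bar> + \<bar>G2\<bar> + \<bar>H1\<bar> + \<bar>H2\<bar> > 0" using d0 by (cases "G1 = 0"; cases "G2 = 0") auto
  have cpos: "c > 0" unfolding c_def using d0 Mpos by (intro divide_pos_pos) auto
  have key: "c \<le> \<bar>G1 * e$1 + G2 * e$2\<bar> + \<bar>H1 * e$1 + H2 * e$2\<bar>" if "norm e = 1" for e :: "real^2"
    unfolding c_def by (rule unit_lower[OF that d0])
  have c8: "c/8 > 0" using cpos by simp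
  obtain d1 where d1: "d1 > 0" "\<And>z. dist z z0 < d1 \<Longrightarrow> \<bar>g1 z - G1\<bar> < c/8"
    using cont_delta[OF cg1[folded z0_def] c8] unfolding G1_def by blast
  obtain d2 where d2: "d2 > 0" "\<And>z. dist z z0 < d2 \<Longrightarrow> \<bar>g2 z - G2\<bar> < c/8"
    using cont_delta[OF cg2[folded z0_def] c8] unfolding G2_def by blast
  obtain d3 where d3: "d3 > 0" "\<And>z. dist z z0 < d3 \<Longrightarrow> \<bar>h1 z - H1\<bar> < c/8"
    using cont_delta[OF ch1[folded z0_def] c8] unfolding H1_def by blast
  obtain d4 where d4: "d4 > 0" "\<And>z. dist z z0 < d4 \<Longrightarrow> \<bar>h2 z - H2\<bar> < c/8"
    using cont_delta[OF ch2[folded z0_def] c8] unfolding H2_def by blast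
  define \<delta> where "\<delta> = min r (min (min d1 d2) (min d3 d4)) / 3"
  have \<delta>pos: "\<delta> > 0" unfolding \<delta>_def using r d1 d2 d3 d4 by simp
  have \<delta>r: "\<delta> \<le> r" unfolding \<delta>_def using r by simp
  have "transversal F (ball t0 \<delta>) (ball u0 \<delta>)"
    unfolding transversal_def Let_def
  proof (rule exI[of _ "c/4"], intro conjI ballI impI allI)
    show "c/4 > 0" using cpos by simp
    fix t v w
    assume t: "t \<in> ball t0 \<delta>" and v: "v \<in> ball u0 \<delta>" and w: "w \<in> ball u0 \<delta>" and vw: "v \<noteq> w"
    have tr: "dist t t0 < r" "dist v u0 < r" "dist w u0 < r"
      using t v w \<delta>r \<delta>pos by (auto simp: dist_commute)
    have "dist (t,v,w) z0 \<le> dist t t0 + dist v u0 + dist w u0" unfolding z0_def by (rule dist3)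
    also have "\<dots> < 3 * \<delta>" using t v w by (simp add: dist_commute)
    also have "\<dots> \<le> min (min d1 d2) (min d3 d4)" unfolding \<delta>_def by (simp add: min_le_iff_disj)
    finally have dz: "dist (t,v,w) z0 < min (min d1 d2) (min d3 d4)" .
    have a1: "\<bar>g1 (t,v,w) - G1\<bar> < c/8" using d1(2) dz by simp
    have a2: "\<bar>g2 (t,v,w) - G2\<bar> < c/8" using d2(2) dz by simp
    have a3: "\<bar>h1 (t,v,w) - H1\<bar> < c/8" using d3(2) dz by simp
    have a4: "\<bar>h2 (t,v,w) - H2\<bar> < c/8" using d4(2) dz by simp
    define n where "n = norm (v - w)"
    have npos: "n > 0" using vw unfolding n_def by simp
    define e where "e = (1/n) *\<^sub>R (v - w)"
    have ne: "norm e = 1" unfolding e_def n_def using vw by simp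
    have ei: "\<bar>e$1\<bar> \<le> 1" "\<bar>e$2\<bar> \<le> 1" using component_le_norm_cart[of e] ne by auto
    have Phi: "(F t v - F t w) / n = g1 (t,v,w) * e$1 + g2 (t,v,w) * e$2"
      unfolding eqF[OF tr] e_def using npos by (simp add: field_simps)
    have Dv: "(Ft t v - Ft t w) / n = h1 (t,v,w) * e$1 + h2 (t,v,w) * e$2"
      unfolding eqFt[OF tr] e_def using npos by (simp add: field_simps)
    have DD: "((\<lambda>s. (F s v - F s w) / n) has_real_derivative (Ft t v - Ft t w) / n) (at t)"
      by (intro DERIV_cdivide DERIV_diff der tr)
    have lin: "\<bar>(x1 * e$1 + x2 * e$2) - (y1 * e$1 + y2 * e$2)\<bar> < c/4"
      if "\<bar>x1 - y1\<bar> < c/8" "\<bar>x2 - y2\<bar> < c/8" for x1 x2 y1 y2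
    proof -
      have "\<bar>(x1 * e$1 + x2 * e$2) - (y1 * e$1 + y2 * e$2)\<bar> = \<bar>(x1 - y1) * e$1 + (x2 - y2) * e$2\<bar>"
        by (simp add: algebra_simps)
      also have "\<dots> \<le> \<bar>x1 - y1\<bar> * \<bar>e$1\<bar> + \<bar>x2 - y2\<bar> * \<bar>e$2\<bar>"
        by (metis abs_mult abs_triangle_ineq)
      also have "\<dots> \<le> \<bar>x1 - y1\<bar> + \<bar>x2 - y2\<bar>"
        using ei by (intro add_mono mult_left_le) auto
      finally show ?thesis using that by simp
    qed
    have l1: "\<bar>(g1 (t,v,w) * e$1 + g2 (t,v,w) * e$2) - (G1 * e$1 + G2 * e$2)\<bar> < c/4"
      by (rule lin) (use a1 a2 in auto)
    have l2: "\<bar>(h1 (t,v,w) * e$1 + h2 (t,v,w) * e$2) - (H1 * e$1 + H2 * e$2)\<bar> < c/4"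
      by (rule lin) (use a3 a4 in auto)
    have k: "c \<le> \<bar>G1 * e$1 + G2 * e$2\<bar> + \<bar>H1 * e$1 + H2 * e$2\<bar>" by (rule key[OF ne])
    assume "\<bar>(F t v - F t w) / norm (v - w)\<bar> \<le> c/4"
    then have "\<bar>g1 (t,v,w) * e$1 + g2 (t,v,w) * e$2\<bar> \<le> c/4" using Phi unfolding n_def by simp
    then have "\<bar>h1 (t,v,w) * e$1 + h2 (t,v,w) * e$2\<bar> \<ge> c/4" using l1 l2 k by linarith
    then show "\<exists>D. ((\<lambda>s. (F s v - F s w) / norm (v - w)) has_real_derivative D) (at t) \<and> c/4 \<le> \<bar>D\<bar>"
      using DD Dv unfolding n_def by auto
  qed
  then show ?thesis using \<delta>pos \<delta>r by blast
qed




lemma mexp_inv': "mexp (-t) A ** mexp t A = mat 1"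
  using mexp_inv[of "-t" A] by simp

lemma gam_nz: "v \<noteq> 0 \<Longrightarrow> gam A t v \<noteq> 0"
proof
  assume "v \<noteq> 0" "gam A t v = 0"
  then have "mexp (-t) A *v (mexp t A *v v) = 0" by (simp add: gam_def)
  then have "v = 0" by (simp add: matrix_vector_mul_assoc mexp_inv')
  with \<open>v \<noteq> 0\<close> show False by simp
qed

lemma det_mexp: "det (mexp t A) \<noteq> 0"
proof
  assume "det (mexp t A) = 0"
  then have "det (mexp t A ** mexp (-t) A) = 0" by (simp add: det_mul)
  then show False by (simp add: mexp_inv det_I)
qed

lemma infY_nz: "infY \<noteq> 0" by (simp add: infY_def vec_eq_iff forall_3)

lemma part1:
  assumes "v \<noteq> 0" "(t, v) \<notin> setS A"
  shows "gam A t v $ 1 \<noteq> 0 \<or> gam A t v $ 3 \<noteq> 0"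
proof (rule ccontr)
  let ?w = "gam A t v"
  assume "\<not> ?thesis"
  then have w13: "?w $ 1 = 0" "?w $ 3 = 0" by auto
  have wnz: "?w \<noteq> 0" using gam_nz assms(1) by blast
  have eq: "?w = (?w $ 2) *\<^sub>R infY" using w13 by (simp add: vec_eq_iff forall_3 infY_def)
  have "?w $ 2 \<noteq> 0" using wnz eq by auto
  then have "proj_eq ?w infY" using eq wnz infY_nz unfolding proj_eq_def by blast
  then show False using assms by (simp add: setS_def)
qed


lemma proj_eq_infY: "proj_eq w infY \<Longrightarrow> w$1 = 0 \<and> w$3 = 0"
  by (auto simp: proj_eq_def infY_def)

lemma notK_G:
  assumes "v \<noteq> 0" "(t, v) \<notin> setK A"
  shows "Gf A (gam A t v) \<noteq> 0"
proof -
  let ?w = "gam A t v"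
  have nS: "(t, v) \<notin> setS A" and nL: "(t,v) \<notin> setL A" using assms(2) by (auto simp: setK_def)
  have p1: "?w $ 1 \<noteq> 0 \<or> ?w $ 3 \<noteq> 0" using part1[OF assms(1) nS] .
  have nL0: "\<not> in_L0 A ?w" using nL assms(1) by (simp add: setL_def)
  show ?thesis
  proof (cases "A$3$2 \<noteq> 0")
    case True
    show ?thesis
    proof (cases "?w $ 3 = 0")
      case True
      then show ?thesis using p1 \<open>A$3$2 \<noteq> 0\<close> by (simp add: Gf_def)
    next
      case False
      then have "A$3$2 * (?w$1 / ?w$3) \<noteq> A$1$2" using nL0 \<open>A$3$2 \<noteq> 0\<close> by (simp add: in_L0_def)
      then show ?thesis using False by (auto simp: Gf_def field_simps)
    qed
  next
    case False
    then show ?thesis using nL0 by (auto simp: in_L0_def Gf_def split: if_splits)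
  qed
qed

lemma G_notK:
  assumes "Gf A (gam A t v) \<noteq> 0"
  shows "(t, v) \<notin> setK A"
proof -
  let ?w = "gam A t v"
  have "\<not> proj_eq ?w infY" using assms proj_eq_infY by (force simp: Gf_def)
  moreover have "\<not> in_L0 A ?w" using assms by (auto simp: in_L0_def Gf_def field_simps split: if_splits)
  ultimately show ?thesis by (auto simp: setK_def setS_def setL_def)
qed

lemma gam_deriv: "((\<lambda>s. gam A s x $ i) has_real_derivative (A *v gam A t x) $ i) (at t)"
proof -
  have "((\<lambda>s. \<Sum>l\<in>UNIV. mexp s A $ i $ l * x $ l) has_real_derivative
          (\<Sum>l\<in>UNIV. (A ** mexp t A) $ i $ l * x $ l)) (at t)"
    by (intro DERIV_sum DERIV_cmult_right[OF mexp_deriv]) 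
  moreover have "(\<Sum>l\<in>UNIV. (A ** mexp t A) $ i $ l * x $ l) = (A *v gam A t x) $ i"
    by (simp add: gam_def matrix_vector_mul_assoc) (simp add: matrix_vector_mult_def)
  ultimately show ?thesis by (simp add: gam_def matrix_vector_mult_def)
qed

lemma Qk_deriv: "((\<lambda>s. Qk k (gam A s x)) has_real_derivative Qk k (A *v gam A t x)) (at t)"
  by (cases "k = 1") (simp_all add: Qk_def gam_deriv)

lemma Pk_deriv: "((\<lambda>s. Pk k (gam A s x)) has_real_derivative Pk k (A *v gam A t x)) (at t)"
  by (cases "k = 1") (simp_all add: Pk_def gam_deriv)

lemma tchart_pi_eq: "tchart_pi k w = Pk k w / Qk k w"
  by (simp add: tchart_pi_def Pk_def Qk_def)

lemma tchart_dom_eq: "tchart_dom k w \<longleftrightarrow> Qk k w \<noteq> 0"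
  by (simp add: tchart_dom_def Qk_def)

lemma Pi_deriv:
  assumes "Qk k (gam A t (chart_inv j u)) \<noteq> 0"
  shows "((\<lambda>s. Pi_coord A j k s u) has_real_derivative Vf k A (gam A t (chart_inv j u))) (at t)"
proof -
  let ?x = "chart_inv j u"
  have "((\<lambda>s. Pk k (gam A s ?x) / Qk k (gam A s ?x)) has_real_derivative
     (Pk k (A *v gam A t ?x) * Qk k (gam A t ?x) - Pk k (gam A t ?x) * Qk k (A *v gam A t ?x)) / (Qk k (gam A t ?x))^2) (at t)"
    using DERIV_divide[OF Pk_deriv Qk_deriv assms] by (simp add: power2_eq_square)
  then show ?thesis unfolding Pi_coord_def tchart_pi_eq Vf_def om_def by (simp add: mult.commute)
qed

lemma isCont_nth[continuous_intros]: "isCont f z \<Longrightarrow> isCont (\<lambda>x. f x $ i) z"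
  unfolding isCont_def by (rule tendsto_vec_nth)

lemma isCont_vecI: "(\<And>i. isCont (\<lambda>x. f x $ i) z) \<Longrightarrow> isCont f z"
  unfolding isCont_def by (rule vec_tendstoI)

lemma isCont_mexp[continuous_intros]:
  fixes f :: "'a::t2_space \<Rightarrow> real"
  shows "isCont f z \<Longrightarrow> isCont (\<lambda>x. mexp (f x) A $ i $ l) z"
  by (rule isCont_o2[where g="\<lambda>t. mexp t A $ i $ l"]) (auto intro: DERIV_isCont mexp_deriv)

lemma isCont_gam[continuous_intros]:
  fixes f :: "'a::t2_space \<Rightarrow> real"
  shows "isCont f z \<Longrightarrow> isCont g z \<Longrightarrow> isCont (\<lambda>x. gam A (f x) (g x)) z"
  unfolding gam_def by (rule isCont_vecI) (simp add: matrix_vector_mult_def, intro continuous_intros)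

lemma isCont_mv[continuous_intros]: "isCont f z \<Longrightarrow> isCont (\<lambda>x. (M::real^3^3) *v f x) z"
  by (rule isCont_vecI) (simp add: matrix_vector_mult_def continuous_intros)

lemma isCont_chart[continuous_intros]: "isCont g z \<Longrightarrow> isCont (\<lambda>x. chart_inv j (g x)) z"
  unfolding chart_inv_eq by (intro continuous_intros)

lemma isCont_Qk[continuous_intros]: "isCont f z \<Longrightarrow> isCont (\<lambda>x. Qk k (f x)) z"
  unfolding Qk_def by (cases "k = 1") (simp_all add: continuous_intros)

lemma isCont_Pk[continuous_intros]: "isCont f z \<Longrightarrow> isCont (\<lambda>x. Pk k (f x)) z"
  unfolding Pk_def by (cases "k = 1") (simp_all add: continuous_intros)

lemma isCont_om[continuous_intros]: "isCont f z \<Longrightarrow> isCont g z \<Longrightarrow> isCont (\<lambda>x. om k (f x) (g x)) z"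
  unfolding om_def by (intro continuous_intros)

lemma isCont_Gf[continuous_intros]: "isCont f z \<Longrightarrow> isCont (\<lambda>x. Gf A (f x)) z"
  unfolding Gf_def by (intro continuous_intros)

lemma isCont_hh:
  assumes "isCont f z" "isCont g z" "isCont h z" "Qk k (f z) \<noteq> 0" "Qk k (g z) \<noteq> 0"
  shows "isCont (\<lambda>x. hh k A (f x) (g x) (h x)) z"
  unfolding hh_def by (intro isCont_divide continuous_intros assms) (use assms in simp)

lemma loc:
  assumes k: "k = 1 \<or> k = 2"
    and Q0: "Qk k (gam A t0 (chart_inv j u0)) \<noteq> 0"
    and G0: "Gf A (gam A t0 (chart_inv j u0)) \<noteq> 0"
  shows "\<exists>\<delta>>0. (\<forall>t u. dist t t0 < \<delta> \<longrightarrow> dist u u0 < \<delta> \<longrightarrow>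
            Qk k (gam A t (chart_inv j u)) \<noteq> 0 \<and> Gf A (gam A t (chart_inv j u)) \<noteq> 0)
          \<and> transversal (Pi_coord A j k) (ball t0 \<delta>) (ball u0 \<delta>)"
proof -
  define W where "W t u = gam A t (chart_inv j u)" for t u
  define z0 :: "real \<times> (real^2) \<times> (real^2)" where "z0 = (t0, u0, u0)"
  define qf where "qf z = Qk k (W (fst z) (fst (snd z)))" for z :: "real \<times> (real^2) \<times> (real^2)"
  define gf where "gf z = Gf A (W (fst z) (fst (snd z)))" for z :: "real \<times> (real^2) \<times> (real^2)"
  have cW1: "isCont (\<lambda>z::real \<times> (real^2) \<times> (real^2). W (fst z) (fst (snd z))) z" for z
    unfolding W_def by (intro continuous_intros)
  have cW2: "isCont (\<lambda>z::real \<times> (real^2) \<times> (real^2). W (fst z) (snd (snd z))) z" for z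
    unfolding W_def by (intro continuous_intros)
  have cq: "isCont qf z0" unfolding qf_def by (intro continuous_intros cW1)
  have cg: "isCont gf z0" unfolding gf_def by (intro continuous_intros cW1)
  have q0: "qf z0 \<noteq> 0" using Q0 by (simp add: qf_def z0_def W_def)
  have g0: "gf z0 \<noteq> 0" using G0 by (simp add: gf_def z0_def W_def)
  obtain dq where dq: "dq > 0" "\<And>z. dist z z0 < dq \<Longrightarrow> \<bar>qf z - qf z0\<bar> < \<bar>qf z0\<bar>"
    using cont_delta[OF cq] q0 by (metis zero_less_abs_iff)
  obtain dg where dg: "dg > 0" "\<And>z. dist z z0 < dg \<Longrightarrow> \<bar>gf z - gf z0\<bar> < \<bar>gf z0\<bar>"
    using cont_delta[OF cg] g0 by (metis zero_less_abs_iff)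
  define r where "r = min dq dg / 3"
  have rpos: "r > 0" unfolding r_def using dq dg by simp
  have region: "Qk k (W t u) \<noteq> 0 \<and> Gf A (W t u) \<noteq> 0" if "dist t t0 < r" "dist u u0 < r" for t u
  proof -
    have "dist (t, u, u) z0 \<le> dist t t0 + dist u u0 + dist u u0" unfolding z0_def by (rule dist3)
    also have "\<dots> < 3 * r" using that by simp
    also have "\<dots> = min dq dg" unfolding r_def by simp
    finally have "dist (t,u,u) z0 < dq" "dist (t,u,u) z0 < dg" by auto
    then have "\<bar>qf (t,u,u) - qf z0\<bar> < \<bar>qf z0\<bar>" "\<bar>gf (t,u,u) - gf z0\<bar> < \<bar>gf z0\<bar>"
      using dq dg by auto
    then have "qf (t,u,u) \<noteq> 0" "gf (t,u,u) \<noteq> 0" by auto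
    then show ?thesis by (simp add: qf_def gf_def)
  qed
  define Da where "Da t = mexp t A *v ca j" for t
  define Db where "Db t = mexp t A *v cb j" for t
  have lin: "W t v = W t w + (v-w)$1 *\<^sub>R Da t + (v-w)$2 *\<^sub>R Db t" for t v w
    unfolding W_def gam_def Da_def Db_def chart_inv_eq
    by (simp add: matrix_vector_right_distrib matrix_vector_mult_scaleR algebra_simps)
  define g1 where "g1 z = om k (W (fst z) (snd (snd z))) (Da (fst z)) /
      (Qk k (W (fst z) (snd (snd z))) * Qk k (W (fst z) (fst (snd z))))" for z :: "real \<times> (real^2) \<times> (real^2)"
  define g2 where "g2 z = om k (W (fst z) (snd (snd z))) (Db (fst z)) /
      (Qk k (W (fst z) (snd (snd z))) * Qk k (W (fst z) (fst (snd z))))" for z :: "real \<times> (real^2) \<times> (real^2)"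
  define h1 where "h1 z = hh k A (W (fst z) (snd (snd z))) (W (fst z) (fst (snd z))) (Da (fst z))"
    for z :: "real \<times> (real^2) \<times> (real^2)"
  define h2 where "h2 z = hh k A (W (fst z) (snd (snd z))) (W (fst z) (fst (snd z))) (Db (fst z))"
    for z :: "real \<times> (real^2) \<times> (real^2)"
  define Ft where "Ft t u = Vf k A (W t u)" for t u
  define y0 where "y0 = W t0 u0"
  have Qy0: "Qk k y0 \<noteq> 0" using Q0 by (simp add: y0_def W_def)
  have cDa: "isCont (\<lambda>z::real \<times> (real^2) \<times> (real^2). Da (fst z)) z" for z
    unfolding Da_def by (rule isCont_vecI) (simp add: matrix_vector_mult_def continuous_intros)
  have cDb: "isCont (\<lambda>z::real \<times> (real^2) \<times> (real^2). Db (fst z)) z" for z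
    unfolding Db_def by (rule isCont_vecI) (simp add: matrix_vector_mult_def continuous_intros)
  have c1: "isCont g1 (t0,u0,u0)" unfolding g1_def
    by (intro isCont_divide continuous_intros cW1 cW2 cDa) (use Q0 in \<open>simp add: W_def\<close>)
  have c2: "isCont g2 (t0,u0,u0)" unfolding g2_def
    by (intro isCont_divide continuous_intros cW1 cW2 cDb) (use Q0 in \<open>simp add: W_def\<close>)
  have c3: "isCont h1 (t0,u0,u0)" unfolding h1_def
    by (intro isCont_hh cW1 cW2 cDa) (use Q0 in \<open>simp_all add: W_def\<close>)
  have c4: "isCont h2 (t0,u0,u0)" unfolding h2_def
    by (intro isCont_hh cW1 cW2 cDb) (use Q0 in \<open>simp_all add: W_def\<close>)
  have tr: "trip y0 (Da t0) (Db t0) \<noteq> 0"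
    unfolding y0_def W_def gam_def Da_def Db_def trip_mat using det_mexp trip_chart by simp
  have Gy0: "Gf A y0 \<noteq> 0" using G0 by (simp add: y0_def W_def)
  have det: "g1 (t0,u0,u0) * h2 (t0,u0,u0) - g2 (t0,u0,u0) * h1 (t0,u0,u0) \<noteq> 0"
  proof -
    have "g1 (t0,u0,u0) * h2 (t0,u0,u0) - g2 (t0,u0,u0) * h1 (t0,u0,u0) = Gf A y0 * trip y0 (Da t0) (Db t0) / (Qk k y0)^4"
      unfolding g1_def g2_def h1_def h2_def using base_det[OF k Qy0] by (simp add: y0_def)
    then show ?thesis using Gy0 tr Qy0 by simp
  qed
  have eqF: "Pi_coord A j k t v - Pi_coord A j k t w = g1 (t,v,w) * (v-w)$1 + g2 (t,v,w) * (v-w)$2"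
    if "dist t t0 < r" "dist v u0 < r" "dist w u0 < r" for t v w
    unfolding Pi_coord_def tchart_pi_eq g1_def g2_def W_def[symmetric]
    using F_diff[OF _ _ lin] region[OF that(1,2)] region[OF that(1,3)] by (simp add: mult.commute)
  have eqFt: "Ft t v - Ft t w = h1 (t,v,w) * (v-w)$1 + h2 (t,v,w) * (v-w)$2"
    if "dist t t0 < r" "dist v u0 < r" "dist w u0 < r" for t v w
    unfolding Ft_def h1_def h2_def
    using Ft_diff[OF _ _ lin] region[OF that(1,2)] region[OF that(1,3)] by simp
  have der: "((\<lambda>s. Pi_coord A j k s v) has_real_derivative Ft t v) (at t)"
    if "dist t t0 < r" "dist v u0 < r" for t v
    unfolding Ft_def W_def using Pi_deriv region[OF that] by (simp add: W_def)
  obtain \<delta> where \<delta>: "\<delta> > 0" "\<delta> \<le> r" "transversal (Pi_coord A j k) (ball t0 \<delta>) (ball u0 \<delta>)"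
    using transversal_generic[OF c1 c2 c3 c4 det rpos eqF eqFt der] by blast
  show ?thesis
    using \<delta> region unfolding W_def by (intro exI[of _ \<delta>]) auto
qed




lemma chart_back:
  assumes "chart_dom j v"
  shows "chart_inv j (chart_coord j v) = (1 / (if j = 1 then v$1 else if j = 2 then v$2 else v$3)) *\<^sub>R v"
  using assms by (auto simp: chart_inv_def chart_coord_def chart_dom_def vec_eq_iff forall_3)

lemma Gf_scale: "Gf A (c *\<^sub>R w) = c * Gf A w" by (simp add: Gf_def algebra_simps)

theorem theorem4p1:
  fixes A :: "real^3^3"
  assumes "A \<noteq> 0"
  shows "(\<forall>t v. v \<noteq> 0 \<and> (t, v) \<notin> setS A \<longrightarrow>
            (gam A t v)$1 \<noteq> 0 \<or> (gam A t v)$3 \<noteq> 0)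
         \<and> Pi_locally_transversal A"
proof
  show "\<forall>t v. v \<noteq> 0 \<and> (t, v) \<notin> setS A \<longrightarrow> (gam A t v)$1 \<noteq> 0 \<or> (gam A t v)$3 \<noteq> 0"
    using part1 by blast
  show "Pi_locally_transversal A"
    unfolding Pi_locally_transversal_def
  proof (intro allI impI)
    fix t0 v0
    assume a: "v0 \<noteq> 0 \<and> (t0, v0) \<notin> setK A"
    define w0 where "w0 = gam A t0 v0"
    have G: "Gf A w0 \<noteq> 0" unfolding w0_def using notK_G a by blast
    define j :: nat where "j = (if v0$1 \<noteq> 0 then 1 else if v0$2 \<noteq> 0 then 2 else 3)"
    define vj where "vj = (if j = 1 then v0$1 else if j = 2 then v0$2 else v0$3)"
    have v3: "v0$1 = 0 \<Longrightarrow> v0$2 = 0 \<Longrightarrow> v0$3 \<noteq> 0" using a by (auto simp: vec_eq_iff forall_3)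
    have jd: "chart_dom j v0" "j \<in> {1,2,3}" using v3 by (auto simp: j_def chart_dom_def)
    have vj: "vj \<noteq> 0" using v3 by (auto simp: vj_def j_def)
    define k :: nat where "k = (if w0$3 \<noteq> 0 then 1 else 2)"
    have k: "k = 1 \<or> k = 2" by (simp add: k_def)
    have Qw: "Qk k w0 \<noteq> 0" using G by (auto simp: k_def Qk_def Gf_def)
    define u0 where "u0 = chart_coord j v0"
    have ci: "chart_inv j u0 = (1 / vj) *\<^sub>R v0" unfolding u0_def vj_def by (rule chart_back[OF jd(1)])
    have y0: "gam A t0 (chart_inv j u0) = (1 / vj) *\<^sub>R w0"
      unfolding ci w0_def gam_def by (simp add: matrix_vector_mult_scaleR)
    have Q0: "Qk k (gam A t0 (chart_inv j u0)) \<noteq> 0" unfolding y0 Qk_scale using Qw vj by simp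
    have G0: "Gf A (gam A t0 (chart_inv j u0)) \<noteq> 0" unfolding y0 Gf_scale using G vj by simp
    obtain \<delta> where \<delta>: "\<delta> > 0"
      "\<And>t u. dist t t0 < \<delta> \<Longrightarrow> dist u u0 < \<delta> \<Longrightarrow>
            Qk k (gam A t (chart_inv j u)) \<noteq> 0 \<and> Gf A (gam A t (chart_inv j u)) \<noteq> 0"
      "transversal (Pi_coord A j k) (ball t0 \<delta>) (ball u0 \<delta>)"
      using loc[OF k Q0 G0] by blast
    show "\<exists>Lam Om j k. j \<in> {1,2,3} \<and> k \<in> {1,2} \<and>
          open Lam \<and> t0 \<in> Lam \<and> open Om \<and>
          chart_dom j v0 \<and> chart_coord j v0 \<in> Om \<and>
          (\<forall>t\<in>Lam. \<forall>u\<in>Om. (t, chart_inv j u) \<notin> setK A \<and>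
                              tchart_dom k (gam A t (chart_inv j u))) \<and>
          transversal (Pi_coord A j k) Lam Om"
    proof (intro exI conjI)
      show "j \<in> {1,2,3}" by (rule jd(2))
      show "k \<in> {1,2}" using k by auto
      show "open (ball t0 \<delta>)" "open (ball u0 \<delta>)" by simp_all
      show "t0 \<in> ball t0 \<delta>" using \<delta>(1) by simp
      show "chart_dom j v0" by (rule jd(1))
      show "chart_coord j v0 \<in> ball u0 \<delta>" using \<delta>(1) by (simp add: u0_def)
      show "\<forall>t\<in>ball t0 \<delta>. \<forall>u\<in>ball u0 \<delta>. (t, chart_inv j u) \<notin> setK A \<and>
                              tchart_dom k (gam A t (chart_inv j u))"
        using \<delta>(2) G_notK by (auto simp: tchart_dom_eq dist_commute)
      show "transversal (Pi_coord A j k) (ball t0 \<delta>) (ball u0 \<delta>)" by (rule \<delta>(3))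
    qed
  qed
qed


end
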